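(* Let $Q_0$ be a Boolean conjunctive query without self-joins whose atoms have the form $R(u,v)$ with first attribute as key, and let $Q=Q_0,R^c(\underline{u},v)$, where $R^c$ is a relation of consistent type not occurring in $Q_0$ and $u\neq v$ are variables of $Q_0$ (so $R^c(\underline u,v)$ is a chord of $Q_0$). Let $I$ be an instance for $Q$. If $\mathcal M_{Q_0}(I)$ is representable with compression $A_{Q_0}(I)$, then $\mathcal M_Q(I)$ is also representable, and a compression of it is $A_Q(I)=\{A\in A_{Q_0}(I): \forall t\in A,\ (t[u],t[v])\in (R^c)^I\}$.
   Context: Repairs: maximal subsets of $I$ satisfying all key constraints (relations of consistent type already satisfy theirs). For a query $Q'$, $Q'^f(r)$ is the set of satisfying valuations of the variables of $Q'$ in $r$; $t[x]$ denotes the value of variable $x$ in valuation $t$. A repair $r$ of $I$ is frugal for $Q'$ if no repair $r'$ has $Q'^f(r')\subsetneq Q'^f(r)$, and $\mathcal M_{Q'}(I)=\{Q'^f(r): r$ frugal repair of $I$ for $Q'\}$ (for $Q_0$ the relation $R^c$ is ignored). For a family $\mathcal S_0=\{A_1,\dots,A_m\}$ of nonempty sets of tuples, $\alpha(\mathcal S_0)=\{\{t_1,\dots,t_m\}: t_i\in A_i\}$; a collection $\mathcal S$ is representable if $\mathcal S=\alpha(\mathcal S_0)$ for such a family whose distinct members share no constant in any coordinate; $\mathcal S_0$ is then a compression of $\mathcal S$. *)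

theory Defs
  imports Main
begin

(* Atoms R(x,y): relation name, first (key) variable, second variable. A query is a set of atoms. *)
type_synonym ('r,'v) atom = "'r \<times> 'v \<times> 'v"
type_synonym ('r,'c) inst = "'r \<Rightarrow> ('c \<times> 'c) set"
(* Valuations of the query variables: partial maps whose domain is exactly the query variables. *)
type_synonym ('v,'c) valuation = "'v \<rightharpoonup> 'c"

definition qvars :: "('r,'v) atom set \<Rightarrow> 'v set" where
  "qvars Q = (\<Union>(R,x,y)\<in>Q. {x, y})"

definition self_join_free :: "('r,'v) atom set \<Rightarrow> bool" where
  "self_join_free Q \<longleftrightarrow> (\<forall>a\<in>Q. \<forall>b\<in>Q. fst a = fst b \<longrightarrow> a = b)"

definition key_consistent :: "('c \<times> 'c) set \<Rightarrow> bool" where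
  "key_consistent S \<longleftrightarrow> (\<forall>a b c. (a,b) \<in> S \<longrightarrow> (a,c) \<in> S \<longrightarrow> b = c)"

definition sub_inst :: "('r,'c) inst \<Rightarrow> ('r,'c) inst \<Rightarrow> bool" where
  "sub_inst r I \<longleftrightarrow> (\<forall>R. r R \<subseteq> I R)"

definition consistent_sub :: "('r,'c) inst \<Rightarrow> ('r,'c) inst \<Rightarrow> bool" where
  "consistent_sub r I \<longleftrightarrow> sub_inst r I \<and> (\<forall>R. key_consistent (r R))"

definition is_repair :: "('r,'c) inst \<Rightarrow> ('r,'c) inst \<Rightarrow> bool" where
  "is_repair I r \<longleftrightarrow> consistent_sub r I \<and>
     (\<forall>r'. consistent_sub r' I \<and> sub_inst r r' \<longrightarrow> r' = r)"

definition qsol :: "('r,'v) atom set \<Rightarrow> ('r,'c) inst \<Rightarrow> ('v,'c) valuation set" where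
  "qsol Q r = {t. dom t = qvars Q \<and>
       (\<forall>(R,x,y)\<in>Q. \<exists>a b. t x = Some a \<and> t y = Some b \<and> (a,b) \<in> r R)}"

definition frugal :: "('r,'v) atom set \<Rightarrow> ('r,'c) inst \<Rightarrow> ('r,'c) inst \<Rightarrow> bool" where
  "frugal Q I r \<longleftrightarrow> is_repair I r \<and> \<not> (\<exists>r'. is_repair I r' \<and> qsol Q r' \<subset> qsol Q r)"

definition Mset :: "('r,'v) atom set \<Rightarrow> ('r,'c) inst \<Rightarrow> ('v,'c) valuation set set" where
  "Mset Q I = {qsol Q r | r. frugal Q I r}"

definition alpha :: "'a set set \<Rightarrow> 'a set set" where
  "alpha S0 = {T. \<exists>f. (\<forall>A\<in>S0. f A \<in> A) \<and> T = f ` S0}"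

definition compression :: "('v,'c) valuation set set \<Rightarrow> ('v,'c) valuation set set \<Rightarrow> bool" where
  "compression S S0 \<longleftrightarrow> finite S0 \<and> (\<forall>A\<in>S0. A \<noteq> {}) \<and>
     (\<forall>A\<in>S0. \<forall>B\<in>S0. A \<noteq> B \<longrightarrow>
        (\<forall>t\<in>A. \<forall>t'\<in>B. \<forall>x. t x \<noteq> None \<longrightarrow> t x \<noteq> t' x)) \<and>
     S = alpha S0"

definition representable :: "('v,'c) valuation set set \<Rightarrow> bool" where
  "representable S \<longleftrightarrow> (\<exists>S0. compression S S0)"

end

theory Submission
  imports Defs
begin

lemma repair_consistent_rel:
  assumes "is_repair I r" "key_consistent (I Rc)"
  shows "r Rc = I Rc"
proof -
  let ?r' = "r(Rc := I Rc)"
  have c: "consistent_sub r I" using assms(1) by (simp add: is_repair_def)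
  have "consistent_sub ?r' I" using c assms(2)
    by (auto simp: consistent_sub_def sub_inst_def)
  moreover have "sub_inst r ?r'" using c
    by (auto simp: consistent_sub_def sub_inst_def)
  ultimately have "?r' = r" using assms(1) by (simp add: is_repair_def)
  then show ?thesis by (metis fun_upd_same)
qed

lemma qvars_insert: "qvars (insert (R,x,y) Q) = {x,y} \<union> qvars Q"
  by (auto simp: qvars_def)

lemma qsol_chord:
  assumes "is_repair I r" "key_consistent (I Rc)" "u \<in> qvars Q0" "v \<in> qvars Q0"
  shows "qsol (insert (Rc,u,v) Q0) r = {t \<in> qsol Q0 r. (the (t u), the (t v)) \<in> I Rc}"
proof -
  have rc: "r Rc = I Rc" using repair_consistent_rel assms(1,2) .
  have qv: "qvars (insert (Rc,u,v) Q0) = qvars Q0" using assms(3,4) by (auto simp: qvars_insert)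
  show ?thesis
  proof (intro set_eqI iffI)
    fix t assume "t \<in> qsol (insert (Rc,u,v) Q0) r"
    then show "t \<in> {t \<in> qsol Q0 r. (the (t u), the (t v)) \<in> I Rc}"
      using qv rc unfolding qsol_def by auto
  next
    fix t assume a: "t \<in> {t \<in> qsol Q0 r. (the (t u), the (t v)) \<in> I Rc}"
    then have d: "dom t = qvars Q0" by (simp add: qsol_def)
    obtain a b where "t u = Some a" "t v = Some b" using d assms(3,4) by blast
    then show "t \<in> qsol (insert (Rc,u,v) Q0) r"
      using a qv rc unfolding qsol_def by auto
  qed
qed

lemma qsol_mono: "sub_inst r I \<Longrightarrow> qsol Q r \<subseteq> qsol Q I"
  by (fastforce simp: qsol_def sub_inst_def)

lemma qsol_finite:
  assumes "finite Q0" "\<forall>R. finite (I R)"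
  shows "finite (qsol Q0 I)"
proof -
  let ?C = "\<Union>(R,x,y)\<in>Q0. fst ` I R \<union> snd ` I R"
  have fC: "finite ?C" using assms by auto
  have fV: "finite (qvars Q0)" using assms(1) by (auto simp: qvars_def)
  have "qsol Q0 I \<subseteq> {m. dom m = qvars Q0 \<and> ran m \<subseteq> ?C}"
  proof
    fix t assume t: "t \<in> qsol Q0 I"
    have "ran t \<subseteq> ?C"
    proof
      fix z assume "z \<in> ran t"
      then obtain x where tx: "t x = Some z" by (auto simp: ran_def)
      then have "x \<in> qvars Q0" using t by (auto simp: qsol_def)
      then obtain R x1 y1 where at: "(R,x1,y1) \<in> Q0" "x = x1 \<or> x = y1"
        by (auto simp: qvars_def)
      then obtain a b where "t x1 = Some a" "t y1 = Some b" "(a,b) \<in> I R"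
        using t unfolding qsol_def by fastforce
      then have "z \<in> fst ` I R \<union> snd ` I R" using at(2) tx by (auto intro: rev_image_eqI)
      then show "z \<in> ?C" using at(1) by blast
    qed
    then show "t \<in> {m. dom m = qvars Q0 \<and> ran m \<subseteq> ?C}" using t by (simp add: qsol_def)
  qed
  then show ?thesis using finite_set_of_finite_maps[OF fV fC] finite_subset by blast
qed

lemma frugal_below:
  assumes "finite Q0" "\<forall>R. finite (I R)" "is_repair I r"
  shows "\<exists>r''. frugal Q0 I r'' \<and> qsol Q0 r'' \<subseteq> qsol Q0 r"
proof -
  let ?X = "{qsol Q0 r | r. is_repair I r}"
  have "?X \<subseteq> Pow (qsol Q0 I)"
    using qsol_mono by (fastforce simp: is_repair_def consistent_sub_def)
  then have fX: "finite ?X" using qsol_finite[OF assms(1,2)] finite_subset by blast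
  have "qsol Q0 r \<in> ?X" using assms(3) by blast
  from finite_has_minimal2[OF fX this] obtain m where
    m: "m \<in> ?X" "m \<subseteq> qsol Q0 r" "\<forall>b\<in>?X. b \<subseteq> m \<longrightarrow> m = b" by blast
  then obtain r'' where r'': "is_repair I r''" "m = qsol Q0 r''" by blast
  have "frugal Q0 I r''" unfolding frugal_def
    using r'' m(3) by blast
  then show ?thesis using r'' m(2) by blast
qed

theorem lemma4p7:
  fixes Q0 :: "('r,'v) atom set" and Rc :: 'r and u v :: 'v
    and I :: "('r,'c) inst" and A0 :: "('v,'c) valuation set set"
  assumes "finite Q0" and "self_join_free Q0"
    and "Rc \<notin> fst ` Q0"
    and "u \<in> qvars Q0" and "v \<in> qvars Q0" and "u \<noteq> v"
    and "\<forall>R. finite (I R)"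
    and "key_consistent (I Rc)"
    and "compression (Mset Q0 I) A0"
  shows "representable (Mset (insert (Rc,u,v) Q0) I)
    \<and> compression (Mset (insert (Rc,u,v) Q0) I)
        {A\<in>A0. \<forall>t\<in>A. (the (t u), the (t v)) \<in> I Rc}"
proof -
  define P where "P = (\<lambda>t::('v,'c) valuation. (the (t u), the (t v)) \<in> I Rc)"
  define Q where "Q = insert (Rc,u,v) Q0"
  define AQ where "AQ = {A\<in>A0. \<forall>t\<in>A. P t}"
  have AQ_eq: "{A\<in>A0. \<forall>t\<in>A. (the (t u), the (t v)) \<in> I Rc} = AQ"
    by (simp add: AQ_def P_def)
  have fin: "finite A0" and ne: "\<forall>A\<in>A0. A \<noteq> {}"
    and dj: "\<forall>A\<in>A0. \<forall>B\<in>A0. A \<noteq> B \<longrightarrow> (\<forall>t\<in>A. \<forall>t'\<in>B. \<forall>x. t x \<noteq> None \<longrightarrow> t x \<noteq> t' x)"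
    and Meq: "Mset Q0 I = alpha A0"
    using assms(9) by (auto simp: compression_def)
  have sol: "\<exists>r. frugal Q0 I r \<and> qsol Q0 r = g ` A0" if "\<forall>A\<in>A0. g A \<in> A" for g
  proof -
    have "g ` A0 \<in> alpha A0" using that by (auto simp: alpha_def)
    then have "g ` A0 \<in> Mset Q0 I" using Meq by simp
    then obtain r where "frugal Q0 I r" "g ` A0 = qsol Q0 r" unfolding Mset_def by blast
    then show ?thesis by metis
  qed
  have MQ0: "\<exists>h. (\<forall>A\<in>A0. h A \<in> A) \<and> qsol Q0 r = h ` A0" if "frugal Q0 I r" for r
  proof -
    have "qsol Q0 r \<in> alpha A0" using that Meq by (auto simp: Mset_def)
    then show ?thesis by (auto simp: alpha_def)
  qed
  have domt: "dom t = qvars Q0" if "A \<in> A0" "t \<in> A" for A t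
  proof -
    define g where "g = (\<lambda>B. if B = A then t else SOME x. x \<in> B)"
    have "\<forall>B\<in>A0. g B \<in> B" using ne that by (auto simp: g_def some_in_eq)
    then obtain r where "qsol Q0 r = g ` A0" using sol by blast
    moreover have "t \<in> g ` A0" using that by (auto simp: g_def intro: rev_image_eqI)
    ultimately have "t \<in> qsol Q0 r" by simp
    then show ?thesis by (simp add: qsol_def)
  qed
  have disj: "A = B" if "A \<in> A0" "B \<in> A0" "t \<in> A" "t \<in> B" for A B t
  proof (rule ccontr)
    assume "A \<noteq> B"
    moreover have "t u \<noteq> None" using domt[OF that(1,3)] assms(4) by auto
    ultimately show False using dj that by blast
  qed
  have qQ: "qsol Q r = {t \<in> qsol Q0 r. P t}" if "is_repair I r" for r
    using qsol_chord[OF that assms(8,4,5)] by (simp add: Q_def P_def)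
  define bad where "bad = (\<lambda>A. SOME t. t \<in> A \<and> \<not> P t)"
  have bad: "bad A \<in> A \<and> \<not> P (bad A)" if "A \<in> A0" "A \<notin> AQ" for A
  proof -
    have "\<exists>t. t \<in> A \<and> \<not> P t" using that by (auto simp: AQ_def)
    then show ?thesis unfolding bad_def by (rule someI_ex)
  qed
  have filt: "{t \<in> g ` A0. P t} = g ` AQ"
    if "\<forall>A\<in>A0. g A \<in> A" "\<forall>A\<in>A0 - AQ. \<not> P (g A)" for g
    using that by (auto simp: AQ_def)
  have main: "Mset Q I = alpha AQ"
  proof (intro set_eqI iffI)
    fix T assume "T \<in> Mset Q I"
    then obtain r where fr: "frugal Q I r" and T: "T = qsol Q r" by (auto simp: Mset_def)
    have rr: "is_repair I r" using fr by (simp add: frugal_def)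
    obtain r'' where r'': "frugal Q0 I r''" "qsol Q0 r'' \<subseteq> qsol Q0 r"
      using frugal_below[OF assms(1,7) rr] by blast
    obtain h where h: "\<forall>A\<in>A0. h A \<in> A" "qsol Q0 r'' = h ` A0" using MQ0[OF r''(1)] by blast
    define g where "g = (\<lambda>A. if A \<in> AQ then h A else bad A)"
    have g1: "\<forall>A\<in>A0. g A \<in> A" using h bad by (auto simp: g_def)
    have g2: "\<forall>A\<in>A0 - AQ. \<not> P (g A)" using bad by (auto simp: g_def)
    obtain r3 where r3: "frugal Q0 I r3" "qsol Q0 r3 = g ` A0" using sol[OF g1] by blast
    have "qsol Q r3 = g ` AQ" using qQ r3 filt[OF g1 g2] by (simp add: frugal_def)
    also have "g ` AQ = h ` AQ" by (simp add: g_def)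
    finally have e3: "qsol Q r3 = h ` AQ" .
    have "h ` AQ \<subseteq> qsol Q r"
    proof
      fix t assume "t \<in> h ` AQ"
      then obtain A where A: "A \<in> AQ" "t = h A" by blast
      then have "t \<in> qsol Q0 r" using h r''(2) by (auto simp: AQ_def)
      moreover have "P t" using A h by (auto simp: AQ_def)
      ultimately show "t \<in> qsol Q r" using qQ[OF rr] by simp
    qed
    moreover have "\<not> qsol Q r3 \<subset> qsol Q r" using fr r3(1) by (auto simp: frugal_def)
    ultimately have "T = h ` AQ" using e3 T by blast
    moreover have "\<forall>A\<in>AQ. h A \<in> A" using h by (auto simp: AQ_def)
    ultimately show "T \<in> alpha AQ" by (auto simp: alpha_def)
  next
    fix T assume "T \<in> alpha AQ"
    then obtain f where f: "\<forall>A\<in>AQ. f A \<in> A" "T = f ` AQ" by (auto simp: alpha_def)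
    define g where "g = (\<lambda>A. if A \<in> AQ then f A else bad A)"
    have g1: "\<forall>A\<in>A0. g A \<in> A" using f bad by (auto simp: g_def)
    have g2: "\<forall>A\<in>A0 - AQ. \<not> P (g A)" using bad by (auto simp: g_def)
    obtain r where r: "frugal Q0 I r" "qsol Q0 r = g ` A0" using sol[OF g1] by blast
    have rr: "is_repair I r" using r by (simp add: frugal_def)
    have "qsol Q r = g ` AQ" using qQ[OF rr] r filt[OF g1 g2] by simp
    also have "g ` AQ = f ` AQ" by (simp add: g_def)
    finally have eT: "qsol Q r = T" using f by simp
    have "frugal Q I r"
      unfolding frugal_def
    proof (intro conjI rr notI)
      assume "\<exists>r'. is_repair I r' \<and> qsol Q r' \<subset> qsol Q r"
      then obtain r' where r': "is_repair I r'" "qsol Q r' \<subset> qsol Q r" by blast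
      obtain r'' where r'': "frugal Q0 I r''" "qsol Q0 r'' \<subseteq> qsol Q0 r'"
        using frugal_below[OF assms(1,7) r'(1)] by blast
      obtain h where h: "\<forall>A\<in>A0. h A \<in> A" "qsol Q0 r'' = h ` A0" using MQ0[OF r''(1)] by blast
      have "f ` AQ \<subseteq> qsol Q r'"
      proof
        fix t assume "t \<in> f ` AQ"
        then obtain A where A: "A \<in> AQ" "t = f A" by blast
        have A0: "A \<in> A0" using A by (simp add: AQ_def)
        have hA: "h A \<in> A" using h A0 by blast
        have "P (h A)" using A hA by (auto simp: AQ_def)
        moreover have "h A \<in> qsol Q0 r'" using h r''(2) A0 by blast
        ultimately have hq: "h A \<in> qsol Q r'" using qQ[OF r'(1)] by simp
        then have "h A \<in> f ` AQ" using r'(2) eT f by blast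
        then obtain A' where A': "A' \<in> AQ" "h A = f A'" by blast
        have "A' = A" using disj[of A' A "h A"] A' f hA A0 by (auto simp: AQ_def)
        then show "t \<in> qsol Q r'" using hq A A' by simp
      qed
      then show False using r'(2) eT f by blast
    qed
    then show "T \<in> Mset Q I" using eT by (auto simp: Mset_def)
  qed
  have cQ: "compression (Mset Q I) AQ"
    unfolding compression_def
  proof (intro conjI main)
    show "finite AQ" using fin by (simp add: AQ_def)
    show "\<forall>A\<in>AQ. A \<noteq> {}" using ne by (simp add: AQ_def)
    show "\<forall>A\<in>AQ. \<forall>B\<in>AQ. A \<noteq> B \<longrightarrow> (\<forall>t\<in>A. \<forall>t'\<in>B. \<forall>x. t x \<noteq> None \<longrightarrow> t x \<noteq> t' x)"
    proof (intro ballI impI allI)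
      fix A B t t' x assume "A \<in> AQ" "B \<in> AQ" "A \<noteq> B" "t \<in> A" "t' \<in> B" "t x \<noteq> None"
      then have "A \<in> A0" "B \<in> A0" unfolding AQ_def by auto
      then show "t x \<noteq> t' x" using dj[rule_format, of A B t t' x] \<open>A \<noteq> B\<close> \<open>t \<in> A\<close> \<open>t' \<in> B\<close> \<open>t x \<noteq> None\<close> by simp
    qed
  qed
  then show ?thesis unfolding AQ_eq Q_def[symmetric] representable_def by blast
qed

end
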